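(* Let $\star\in\{\boxtimes,\circ,\times\}$, $k$ a positive integer, and $G,H$ graphs. Then $m_k(G\star H)$ is $\ast$-well-behaved w.r.t. $G$ and $H$ if and only if there exist positive integers $k_G,k_H$ with $k_Gk_H=k$ such that $m_k(G\star H)=2\,m_{k_G}(G)\,m_{k_H}(H)$.
   Context: Graphs are finite, simple, undirected, with non-empty vertex set. For a positive integer $k$, a $k$-matching of $G=(V,E)$ is a set $M\subseteq E$ such that every vertex is incident to either $0$ or exactly $k$ edges of $M$ (the empty set is one); $m_k(G)$ is the maximum size of a $k$-matching of $G$. Products on $V_G\times V_H$: in $G\boxtimes H$, $(g,h)\sim(g',h')$ iff (i) $\{g,g'\}\in E_G$, $h=h'$; or (ii) $g=g'$, $\{h,h'\}\in E_H$; or (iii) $\{g,g'\}\in E_G$ and $\{h,h'\}\in E_H$; in $G\times H$ iff (iii); in $G\circ H$ iff $\{g,g'\}\in E_G$ or (ii). For $M_G\subseteq E_G$, $M_H\subseteq E_H$ define $F_{\ast}(M_G,M_H)=\{\{(g,h),(g',h')\}:\{g,g'\}\in M_G,\{h,h'\}\in M_H\}$. $m_k(G\star H)$ is $\ast$-well-behaved w.r.t. $G$ and $H$ if $m_k(G\star H)=|F_{\ast}(M_G,M_H)|$ for some $M_G\subseteq E_G$, $M_H\subseteq E_H$ for which $F_{\ast}(M_G,M_H)$ is a $k$-matching of $G\star H$. *)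

theory Defs
  imports Main
begin

definition graph :: "'a set \<Rightarrow> 'a set set \<Rightarrow> bool" where
  "graph V E \<longleftrightarrow> finite V \<and> V \<noteq> {} \<and>
     E \<subseteq> {{u, v} | u v. u \<in> V \<and> v \<in> V \<and> u \<noteq> v}"

definition k_matching :: "'a set \<Rightarrow> 'a set set \<Rightarrow> nat \<Rightarrow> 'a set set \<Rightarrow> bool" where
  "k_matching V E k M \<longleftrightarrow> M \<subseteq> E \<and>
     (\<forall>v\<in>V. card {e\<in>M. v \<in> e} = 0 \<or> card {e\<in>M. v \<in> e} = k)"

definition m_k :: "'a set \<Rightarrow> 'a set set \<Rightarrow> nat \<Rightarrow> nat" where
  "m_k V E k = Max (card ` {M. k_matching V E k M})"

datatype prod_kind = Strong | Lexicographic | Direct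

definition prod_edges :: "prod_kind \<Rightarrow> 'a set \<Rightarrow> 'a set set \<Rightarrow> 'b set \<Rightarrow> 'b set set
    \<Rightarrow> ('a \<times> 'b) set set" where
  "prod_edges p VG EG VH EH =
    {{(g, h), (g', h')} | g g' h h'. g \<in> VG \<and> g' \<in> VG \<and> h \<in> VH \<and> h' \<in> VH \<and>
      (case p of
         Strong \<Rightarrow> ({g, g'} \<in> EG \<and> h = h') \<or> (g = g' \<and> {h, h'} \<in> EH)
                   \<or> ({g, g'} \<in> EG \<and> {h, h'} \<in> EH)
       | Lexicographic \<Rightarrow> {g, g'} \<in> EG \<or> (g = g' \<and> {h, h'} \<in> EH)
       | Direct \<Rightarrow> {g, g'} \<in> EG \<and> {h, h'} \<in> EH)}"

definition F_ast :: "'a set set \<Rightarrow> 'b set set \<Rightarrow> ('a \<times> 'b) set set" where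
  "F_ast MG MH = {{(g, h), (g', h')} | g g' h h'. {g, g'} \<in> MG \<and> {h, h'} \<in> MH}"

definition well_behaved :: "prod_kind \<Rightarrow> nat \<Rightarrow> 'a set \<Rightarrow> 'a set set \<Rightarrow> 'b set \<Rightarrow> 'b set set \<Rightarrow> bool" where
  "well_behaved p k VG EG VH EH \<longleftrightarrow>
    (\<exists>MG MH. MG \<subseteq> EG \<and> MH \<subseteq> EH \<and>
       k_matching (VG \<times> VH) (prod_edges p VG EG VH EH) k (F_ast MG MH) \<and>
       m_k (VG \<times> VH) (prod_edges p VG EG VH EH) k = card (F_ast MG MH))"

end

theory Submission
  imports Defs
begin

definition twos :: "'a set set \<Rightarrow> bool" where
  "twos M \<longleftrightarrow> (\<forall>e\<in>M. \<exists>a b. a \<noteq> b \<and> e = {a, b})"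

definition PP :: "'a set \<Rightarrow> 'b set \<Rightarrow> ('a \<times> 'b) set set" where
  "PP e f = {{(g, h), (g', h')} | g g' h h'. {g, g'} = e \<and> {h, h'} = f}"

lemma F_UN: "F_ast MG MH = (\<Union>(e,f)\<in>MG\<times>MH. PP e f)"
  unfolding F_ast_def PP_def by blast

lemma PP_explicit:
  assumes "a \<noteq> b" "c \<noteq> d"
  shows "PP {a,b} {c,d} = {{(a,c),(b,d)},{(a,d),(b,c)}}"
proof (rule set_eqI, rule iffI)
  fix x assume "x \<in> PP {a,b} {c,d}"
  then obtain g g' h h' where x: "x = {(g,h),(g',h')}" "{g,g'} = {a,b}" "{h,h'} = {c,d}"
    unfolding PP_def by blast
  from x(2) have G: "(g = a \<and> g' = b) \<or> (g = b \<and> g' = a)" by (simp add: doubleton_eq_iff)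
  from x(3) have H: "(h = c \<and> h' = d) \<or> (h = d \<and> h' = c)" by (simp add: doubleton_eq_iff)
  have "x = {(a,c),(b,d)} \<or> x = {(a,d),(b,c)}"
    using G H x(1) by (elim disjE conjE) (simp_all add: insert_commute)
  then show "x \<in> {{(a,c),(b,d)},{(a,d),(b,c)}}" by simp
next
  fix x assume "x \<in> {{(a,c),(b,d)},{(a,d),(b,c)}}"
  then have "x = {(a,c),(b,d)} \<or> x = {(a,d),(b,c)}" by simp
  then show "x \<in> PP {a,b} {c,d}"
  proof
    assume "x = {(a,c),(b,d)}"
    then show ?thesis unfolding PP_def by blast
  next
    assume "x = {(a,d),(b,c)}"
    moreover have "{d,c} = {c,d}" by (rule insert_commute)
    ultimately show ?thesis unfolding PP_def by blast
  qed
qed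

lemma PP_img: "x \<in> PP e f \<Longrightarrow> fst ` x = e \<and> snd ` x = f"
  unfolding PP_def by auto

lemma PP_disj: "(e,f) \<noteq> (e',f') \<Longrightarrow> PP e f \<inter> PP e' f' = {}"
proof (rule ccontr)
  assume ne: "(e,f) \<noteq> (e',f')" and "PP e f \<inter> PP e' f' \<noteq> {}"
  then obtain x where "x \<in> PP e f" "x \<in> PP e' f'" by blast
  then have "e = e'" "f = f'" using PP_img by metis+
  then show False using ne by simp
qed

lemma PP_disj2: "i \<noteq> j \<Longrightarrow> (case i of (e, f) \<Rightarrow> PP e f) \<inter> (case j of (e, f) \<Rightarrow> PP e f) = {}"
proof (cases i; cases j)
  fix e f e' f' assume "i \<noteq> j" "i = (e,f)" "j = (e',f')"
  then have "PP e f \<inter> PP e' f' = {}" using PP_disj by simp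
  then show ?thesis using \<open>i = (e,f)\<close> \<open>j = (e',f')\<close> by simp
qed

lemma PP_disj3: "i \<noteq> j \<Longrightarrow> (case i of (e, f) \<Rightarrow> {x\<in>PP e f. P x}) \<inter> (case j of (e, f) \<Rightarrow> {x\<in>PP e f. P x}) = {}"
proof (cases i; cases j)
  fix e f e' f' assume "i \<noteq> j" "i = (e,f)" "j = (e',f')"
  then have "PP e f \<inter> PP e' f' = {}" using PP_disj by simp
  then show ?thesis using \<open>i = (e,f)\<close> \<open>j = (e',f')\<close> by auto
qed

lemma card_PP:
  assumes "a \<noteq> b" "c \<noteq> d"
  shows "card (PP {a,b} {c,d}) = 2"
proof -
  have "(a,c) \<notin> {(a,d),(b,c)}" using assms by simp
  then have "{(a,c),(b,d)} \<noteq> {(a,d),(b,c)}" by blast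
  then show ?thesis using assms by (simp add: PP_explicit)
qed

lemma finite_PP:
  assumes "a \<noteq> b" "c \<noteq> d"
  shows "finite (PP {a,b} {c,d})"
  using assms by (simp add: PP_explicit)

lemma finite_PP2: "twos M \<Longrightarrow> twos N \<Longrightarrow> e \<in> M \<Longrightarrow> f \<in> N \<Longrightarrow> finite (PP e f)"
proof -
  assume "twos M" "twos N" "e \<in> M" "f \<in> N"
  then obtain a b c d where "a \<noteq> b" "e = {a,b}" "c \<noteq> d" "f = {c,d}"
    unfolding twos_def by meson
  then show ?thesis using finite_PP by simp
qed

lemma card_PP2: "twos M \<Longrightarrow> twos N \<Longrightarrow> e \<in> M \<Longrightarrow> f \<in> N \<Longrightarrow> card (PP e f) = 2"
proof -
  assume "twos M" "twos N" "e \<in> M" "f \<in> N"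
  then obtain a b c d where "a \<noteq> b" "e = {a,b}" "c \<noteq> d" "f = {c,d}"
    unfolding twos_def by meson
  then show ?thesis using card_PP by simp
qed

lemma card_F:
  assumes "finite MG" "finite MH" "twos MG" "twos MH"
  shows "card (F_ast MG MH) = 2 * card MG * card MH"
proof -
  have "card (F_ast MG MH) = (\<Sum>i\<in>MG\<times>MH. card ((\<lambda>(e,f). PP e f) i))"
    unfolding F_UN
  proof (rule card_UN_disjoint)
    show "finite (MG \<times> MH)" using assms by simp
    show "\<forall>i\<in>MG \<times> MH. finite (case i of (e, f) \<Rightarrow> PP e f)"
    proof (intro ballI)
      fix i assume "i \<in> MG \<times> MH"
      obtain e f where ief: "i = (e,f)" by (cases i)
      then have ef: "e \<in> MG" "f \<in> MH" using \<open>i \<in> _\<close> by simp_all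
      have "finite (PP e f)" by (rule finite_PP2[OF assms(3,4) ef])
      note this ief
      then show "finite (case i of (e, f) \<Rightarrow> PP e f)"
        using \<open>i = (e,f)\<close> by simp
    qed
    show "\<forall>i\<in>MG \<times> MH. \<forall>j\<in>MG \<times> MH. i \<noteq> j \<longrightarrow>
      (case i of (e, f) \<Rightarrow> PP e f) \<inter> (case j of (e, f) \<Rightarrow> PP e f) = {}"
      by (intro ballI impI PP_disj2)
  qed
  also have "\<dots> = (\<Sum>i\<in>MG\<times>MH. 2)"
  proof (rule sum.cong[OF refl])
    fix i assume "i \<in> MG \<times> MH"
    obtain e f where ief: "i = (e,f)" by (cases i)
    then have ef: "e \<in> MG" "f \<in> MH" using \<open>i \<in> _\<close> by simp_all
    have "card (PP e f) = 2" by (rule card_PP2[OF assms(3,4) ef])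
    note this ief
    then show "card ((\<lambda>(e,f). PP e f) i) = 2"
      using \<open>i = (e,f)\<close> by simp
  qed
  also have "\<dots> = 2 * card MG * card MH" by (simp add: card_cartesian_product)
  finally show ?thesis .
qed

lemma other: "a \<noteq> b \<Longrightarrow> g \<in> {a,b} \<Longrightarrow> \<exists>c. c \<noteq> g \<and> {a,b} = {g,c}"
  by auto

lemma deg_PP:
  assumes "e \<in> M" "twos M" "g \<in> e" "f \<in> N" "twos N" "h \<in> f"
  shows "card {x\<in>PP e f. (g,h) \<in> x} = 1"
proof -
  obtain a1 a2 where "a1 \<noteq> a2" "e = {a1,a2}" using assms(1,2) unfolding twos_def by meson
  then obtain b where b: "b \<noteq> g" "e = {g,b}" using assms(3) other by metis
  obtain c1 c2 where "c1 \<noteq> c2" "f = {c1,c2}" using assms(4,5) unfolding twos_def by meson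
  then obtain d where d: "d \<noteq> h" "f = {h,d}" using assms(6) other by metis
  have "g \<noteq> b" "h \<noteq> d" using b d by auto
  then have pp: "PP e f = {{(g,h),(b,d)},{(g,d),(b,h)}}" unfolding b(2) d(2) by (rule PP_explicit)
  have "(g,h) \<notin> {(g,d),(b,h)}" using b d by simp
  then have "{x\<in>PP e f. (g,h) \<in> x} = {{(g,h),(b,d)}}" unfolding pp by blast
  then show ?thesis by simp
qed

lemma PP_mem: "x \<in> PP e f \<Longrightarrow> (g,h) \<in> x \<Longrightarrow> g \<in> e \<and> h \<in> f"
proof -
  assume "x \<in> PP e f" "(g,h) \<in> x"
  then have "fst ` x = e" "snd ` x = f" "g \<in> fst ` x" "h \<in> snd ` x"
    using PP_img by (force, force, force, force)
  then show ?thesis by simp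
qed

lemma mem_FUN: "x \<in> F_ast MG MH \<longleftrightarrow> (\<exists>e\<in>MG. \<exists>f\<in>MH. x \<in> PP e f)"
  unfolding F_UN by auto

lemma deg_F:
  assumes "finite MG" "finite MH" "twos MG" "twos MH"
  shows "card {x\<in>F_ast MG MH. (g,h) \<in> x} = card {e\<in>MG. g \<in> e} * card {f\<in>MH. h \<in> f}"
proof -
  have eq: "{x\<in>F_ast MG MH. (g,h) \<in> x} =
     (\<Union>i\<in>{e\<in>MG. g \<in> e} \<times> {f\<in>MH. h \<in> f}. (\<lambda>(e,f). {x\<in>PP e f. (g,h) \<in> x}) i)"
  proof (rule set_eqI, rule iffI)
    fix x assume "x \<in> {x\<in>F_ast MG MH. (g,h) \<in> x}"
    then have x: "x \<in> F_ast MG MH" "(g,h) \<in> x" by simp_all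
    from x(1) obtain e f where ef: "e \<in> MG" "f \<in> MH" "x \<in> PP e f" unfolding mem_FUN by blast
    have gh: "g \<in> e \<and> h \<in> f" using PP_mem[OF ef(3) x(2)] .
    then have "g \<in> e" "h \<in> f" by simp_all
    then have i: "(e,f) \<in> {e\<in>MG. g \<in> e} \<times> {f\<in>MH. h \<in> f}" using ef by simp
    have "x \<in> (\<lambda>(e,f). {x\<in>PP e f. (g,h) \<in> x}) (e,f)" using ef x by simp
    then show "x \<in> (\<Union>i\<in>{e\<in>MG. g \<in> e} \<times> {f\<in>MH. h \<in> f}. (\<lambda>(e,f). {x\<in>PP e f. (g,h) \<in> x}) i)"
      using i by (rule UN_I[rotated])
  next
    fix x assume "x \<in> (\<Union>i\<in>{e\<in>MG. g \<in> e} \<times> {f\<in>MH. h \<in> f}. (\<lambda>(e,f). {x\<in>PP e f. (g,h) \<in> x}) i)"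
    then obtain i where i: "i \<in> {e\<in>MG. g \<in> e} \<times> {f\<in>MH. h \<in> f}"
      "x \<in> (\<lambda>(e,f). {x\<in>PP e f. (g,h) \<in> x}) i" by (rule UN_E)
    obtain e f where "i = (e,f)" by (cases i)
    then have ef: "e \<in> MG" "f \<in> MH" "x \<in> PP e f" "(g,h) \<in> x" using i by simp_all
    then have "x \<in> F_ast MG MH" unfolding mem_FUN by blast
    then show "x \<in> {x\<in>F_ast MG MH. (g,h) \<in> x}" using ef(4) by simp
  qed
  have "card {x\<in>F_ast MG MH. (g,h) \<in> x} =
     (\<Sum>i\<in>{e\<in>MG. g \<in> e} \<times> {f\<in>MH. h \<in> f}. card ((\<lambda>(e,f). {x\<in>PP e f. (g,h) \<in> x}) i))"
    unfolding eq
  proof (rule card_UN_disjoint)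
    show "finite ({e \<in> MG. g \<in> e} \<times> {f \<in> MH. h \<in> f})" using assms by simp
    show "\<forall>i\<in>{e \<in> MG. g \<in> e} \<times> {f \<in> MH. h \<in> f}.
       finite (case i of (e, f) \<Rightarrow> {x \<in> PP e f. (g, h) \<in> x})"
    proof (intro ballI)
      fix i assume "i \<in> {e \<in> MG. g \<in> e} \<times> {f \<in> MH. h \<in> f}"
      obtain e f where ief: "i = (e,f)" by (cases i)
      then have ef: "e \<in> MG" "f \<in> MH" using \<open>i \<in> _\<close> by simp_all
      have "finite (PP e f)" by (rule finite_PP2[OF assms(3,4) ef])
      note this ief
      then show "finite (case i of (e, f) \<Rightarrow> {x \<in> PP e f. (g, h) \<in> x})"
        using \<open>i = (e,f)\<close> by simp
    qed
    show "\<forall>i\<in>{e \<in> MG. g \<in> e} \<times> {f \<in> MH. h \<in> f}.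
       \<forall>j\<in>{e \<in> MG. g \<in> e} \<times> {f \<in> MH. h \<in> f}. i \<noteq> j \<longrightarrow>
         (case i of (e, f) \<Rightarrow> {x \<in> PP e f. (g, h) \<in> x}) \<inter>
         (case j of (e, f) \<Rightarrow> {x \<in> PP e f. (g, h) \<in> x}) = {}"
      by (intro ballI impI PP_disj3)
  qed
  also have "\<dots> = (\<Sum>i\<in>{e\<in>MG. g \<in> e} \<times> {f\<in>MH. h \<in> f}. 1)"
  proof (rule sum.cong[OF refl])
    fix i assume "i \<in> {e\<in>MG. g \<in> e} \<times> {f\<in>MH. h \<in> f}"
    obtain e f where ief: "i = (e,f)" by (cases i)
    then have ef: "e \<in> MG" "f \<in> MH" "g \<in> e" "h \<in> f" using \<open>i \<in> _\<close> by simp_all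
    have "card {x\<in>PP e f. (g,h) \<in> x} = 1" by (rule deg_PP[OF ef(1) assms(3) ef(3) ef(2) assms(4) ef(4)])
    note this ief
    then show "card ((\<lambda>(e,f). {x\<in>PP e f. (g,h) \<in> x}) i) = 1"
      using \<open>i = (e,f)\<close> by simp
  qed
  also have "\<dots> = card {e\<in>MG. g \<in> e} * card {f\<in>MH. h \<in> f}"
    by (simp add: card_cartesian_product)
  finally show ?thesis .
qed


lemma km_finite: "finite E \<Longrightarrow> finite {M. k_matching V E k M}"
  unfolding k_matching_def by (rule finite_subset[of _ "Pow E"]) auto

lemma km_empty: "k_matching V E k {}"
  unfolding k_matching_def by simp

lemma m_k_ge: "finite E \<Longrightarrow> k_matching V E k M \<Longrightarrow> card M \<le> m_k V E k"
  unfolding m_k_def using km_finite by (intro Max_ge) auto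

lemma m_k_obtain: "finite E \<Longrightarrow> \<exists>M. k_matching V E k M \<and> card M = m_k V E k"
proof -
  assume fE: "finite E"
  define S where "S = {M. k_matching V E k M}"
  have mS: "m_k V E k = Max (card ` S)" unfolding m_k_def S_def by simp
  have "Max (card ` S) \<in> card ` S"
  proof (rule Max_in)
    show "finite (card ` S)" using km_finite fE unfolding S_def by blast
    have "{} \<in> S" using km_empty unfolding S_def by blast
    then show "card ` S \<noteq> {}" by blast
  qed
  then obtain M where M: "M \<in> S" "Max (card ` S) = card M" by (rule imageE)
  have "k_matching V E k M" using M(1) unfolding S_def by simp
  moreover have "card M = m_k V E k" using M(2) mS by simp
  ultimately show ?thesis by blast
qed

lemma graph_finite: "graph V E \<Longrightarrow> finite E"
  unfolding graph_def
  by (rule finite_subset[of _ "Pow V"]) auto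

lemma graph_twos: "graph V E \<Longrightarrow> M \<subseteq> E \<Longrightarrow> twos M"
  unfolding graph_def twos_def by blast

lemma graph_sub: "graph V E \<Longrightarrow> {a,b} \<in> E \<Longrightarrow> a \<in> V \<and> b \<in> V \<and> a \<noteq> b"
  unfolding graph_def by (auto simp: doubleton_eq_iff)

lemma prod_finite: "graph VG EG \<Longrightarrow> graph VH EH \<Longrightarrow> finite (prod_edges p VG EG VH EH)"
proof -
  assume gs: "graph VG EG" "graph VH EH"
  have "prod_edges p VG EG VH EH \<subseteq> Pow (VG \<times> VH)"
  proof
    fix x assume "x \<in> prod_edges p VG EG VH EH"
    then obtain g g' h h' where "x = {(g,h),(g',h')}" "g \<in> VG" "g' \<in> VG" "h \<in> VH" "h' \<in> VH"
      unfolding prod_edges_def by blast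
    then show "x \<in> Pow (VG \<times> VH)" by simp
  qed
  moreover have "finite (Pow (VG \<times> VH))" using gs unfolding graph_def by simp
  ultimately show ?thesis by (rule finite_subset)
qed

lemma F_sub: "graph VG EG \<Longrightarrow> graph VH EH \<Longrightarrow> MG \<subseteq> EG \<Longrightarrow> MH \<subseteq> EH \<Longrightarrow>
  F_ast MG MH \<subseteq> prod_edges p VG EG VH EH"
proof
  fix x assume gs: "graph VG EG" "graph VH EH" "MG \<subseteq> EG" "MH \<subseteq> EH" and x: "x \<in> F_ast MG MH"
  then obtain g g' h h' where x: "x = {(g,h),(g',h')}" "{g,g'} \<in> MG" "{h,h'} \<in> MH"
    unfolding F_ast_def by blast
  have eG: "{g,g'} \<in> EG" using x(2) gs(3) by blast
  have eH: "{h,h'} \<in> EH" using x(3) gs(4) by blast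
  have G: "g \<in> VG \<and> g' \<in> VG \<and> g \<noteq> g'" using graph_sub[OF gs(1) eG] .
  have H: "h \<in> VH \<and> h' \<in> VH \<and> h \<noteq> h'" using graph_sub[OF gs(2) eH] .
  have c: "case p of
         Strong \<Rightarrow> ({g, g'} \<in> EG \<and> h = h') \<or> (g = g' \<and> {h, h'} \<in> EH)
                   \<or> ({g, g'} \<in> EG \<and> {h, h'} \<in> EH)
       | Lexicographic \<Rightarrow> {g, g'} \<in> EG \<or> (g = g' \<and> {h, h'} \<in> EH)
       | Direct \<Rightarrow> {g, g'} \<in> EG \<and> {h, h'} \<in> EH"
    using eG eH by (cases p) simp_all
  show "x \<in> prod_edges p VG EG VH EH"
    unfolding prod_edges_def x(1)
    apply (rule CollectI)
    apply (rule exI[of _ g], rule exI[of _ g'], rule exI[of _ h], rule exI[of _ h'])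
    using G H c by simp
qed

lemma F_match:
  assumes gs: "graph VG EG" "graph VH EH"
    and mG: "k_matching VG EG kG MG" and mH: "k_matching VH EH kH MH"
  shows "k_matching (VG \<times> VH) (prod_edges p VG EG VH EH) (kG * kH) (F_ast MG MH)"
proof -
  have sub: "MG \<subseteq> EG" "MH \<subseteq> EH" using mG mH unfolding k_matching_def by auto
  have fin: "finite MG" "finite MH"
    using finite_subset[OF sub(1) graph_finite[OF gs(1)]] finite_subset[OF sub(2) graph_finite[OF gs(2)]] .
  have tw: "twos MG" "twos MH" using graph_twos[OF gs(1) sub(1)] graph_twos[OF gs(2) sub(2)] .
  show ?thesis unfolding k_matching_def
  proof (intro conjI ballI)
    show "F_ast MG MH \<subseteq> prod_edges p VG EG VH EH" by (rule F_sub[OF gs sub])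
    fix v assume vV: "v \<in> VG \<times> VH"
    obtain g h where v1: "v = (g,h)" by (cases v)
    then have v: "v = (g,h)" "g \<in> VG" "h \<in> VH" using vV by simp_all
    have "card {x\<in>F_ast MG MH. v \<in> x} = card {e\<in>MG. g \<in> e} * card {f\<in>MH. h \<in> f}"
      unfolding v(1) by (rule deg_F[OF fin tw])
    moreover have "card {e\<in>MG. g \<in> e} = 0 \<or> card {e\<in>MG. g \<in> e} = kG"
      using mG v(2) unfolding k_matching_def by simp
    moreover have "card {e\<in>MH. h \<in> e} = 0 \<or> card {e\<in>MH. h \<in> e} = kH"
      using mH v(3) unfolding k_matching_def by simp
    ultimately show "card {e \<in> F_ast MG MH. v \<in> e} = 0 \<or> card {e \<in> F_ast MG MH. v \<in> e} = kG * kH"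
      by auto
  qed
qed

lemma twos_obtain: "twos M \<Longrightarrow> e \<in> M \<Longrightarrow> \<exists>a b. a \<noteq> b \<and> e = {a,b}"
  unfolding twos_def by blast

lemma F_unmatch:
  assumes gs: "graph VG EG" "graph VH EH" and k: "k > 0"
    and sub: "MG \<subseteq> EG" "MH \<subseteq> EH" and ne: "MG \<noteq> {}" "MH \<noteq> {}"
    and m: "k_matching (VG \<times> VH) (prod_edges p VG EG VH EH) k (F_ast MG MH)"
  shows "\<exists>kG kH. kG > 0 \<and> kH > 0 \<and> kG * kH = k \<and> k_matching VG EG kG MG \<and> k_matching VH EH kH MH"
proof -
  have fin: "finite MG" "finite MH"
    using finite_subset[OF sub(1) graph_finite[OF gs(1)]] finite_subset[OF sub(2) graph_finite[OF gs(2)]] .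
  have tw: "twos MG" "twos MH" using graph_twos[OF gs(1) sub(1)] graph_twos[OF gs(2) sub(2)] .
  define dG where "dG g = card {e\<in>MG. g \<in> e}" for g
  define dH where "dH h = card {e\<in>MH. h \<in> e}" for h
  have deg: "g \<in> VG \<Longrightarrow> h \<in> VH \<Longrightarrow> dG g * dH h = 0 \<or> dG g * dH h = k" for g h
  proof -
    assume "g \<in> VG" "h \<in> VH"
    then have gh: "(g,h) \<in> VG \<times> VH" by simp
    have "\<forall>v\<in>VG \<times> VH. card {x\<in>F_ast MG MH. v \<in> x} = 0 \<or> card {x\<in>F_ast MG MH. v \<in> x} = k"
      using m unfolding k_matching_def by (rule conjunct2)
    then have "card {x\<in>F_ast MG MH. (g,h) \<in> x} = 0 \<or> card {x\<in>F_ast MG MH. (g,h) \<in> x} = k"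
      using gh by (rule bspec)
    then show ?thesis using deg_F[OF fin tw, of g h] unfolding dG_def dH_def by simp
  qed
  obtain e0 where e0: "e0 \<in> MG" using ne by blast
  have "\<exists>a b. a \<noteq> b \<and> e0 = {a,b}" using twos_obtain[OF tw(1) e0] .
  then obtain g0 b where g0: "e0 = {g0,b}" "g0 \<noteq> b" by (elim exE conjE) simp
  have "e0 \<in> EG" using sub(1) e0 by blast
  then have "{g0,b} \<in> EG" using g0(1) by simp
  then have g0V: "g0 \<in> VG" using graph_sub[OF gs(1)] by blast
  have "e0 \<in> {e\<in>MG. g0 \<in> e}" using e0 g0(1) by simp
  moreover have "finite {e\<in>MG. g0 \<in> e}" using fin(1) by simp
  ultimately have dg0: "dG g0 > 0" unfolding dG_def using card_gt_0_iff by blast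
  obtain f0 where f0: "f0 \<in> MH" using ne by blast
  have "\<exists>a b. a \<noteq> b \<and> f0 = {a,b}" using twos_obtain[OF tw(2) f0] .
  then obtain h0 d where h0: "f0 = {h0,d}" "h0 \<noteq> d" by (elim exE conjE) simp
  have "f0 \<in> EH" using sub(2) f0 by blast
  then have "{h0,d} \<in> EH" using h0(1) by simp
  then have h0V: "h0 \<in> VH" using graph_sub[OF gs(2)] by blast
  have "f0 \<in> {e\<in>MH. h0 \<in> e}" using f0 h0(1) by simp
  moreover have "finite {e\<in>MH. h0 \<in> e}" using fin(2) by simp
  ultimately have dh0: "dH h0 > 0" unfolding dH_def using card_gt_0_iff by blast
  have "dG g0 * dH h0 \<noteq> 0" using dg0 dh0 by simp
  then have k0: "dG g0 * dH h0 = k" using deg[OF g0V h0V] by simp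
  show ?thesis
  proof (intro exI conjI)
    show "0 < dG g0" "0 < dH h0" "dG g0 * dH h0 = k" by fact+
    show "k_matching VG EG (dG g0) MG" unfolding k_matching_def
    proof (intro conjI ballI)
      show "MG \<subseteq> EG" by fact
      fix g assume g: "g \<in> VG"
      have "dG g = 0 \<or> dG g = dG g0"
      proof -
        have "dG g * dH h0 = 0 \<or> dG g * dH h0 = dG g0 * dH h0" using deg[OF g h0V] k0 by simp
        then show ?thesis using dh0 by simp
      qed
      then show "card {e \<in> MG. g \<in> e} = 0 \<or> card {e \<in> MG. g \<in> e} = dG g0"
        unfolding dG_def .
    qed
    show "k_matching VH EH (dH h0) MH" unfolding k_matching_def
    proof (intro conjI ballI)
      show "MH \<subseteq> EH" by fact
      fix h assume h: "h \<in> VH"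
      have "dH h = 0 \<or> dH h = dH h0"
      proof -
        have "dG g0 * dH h = 0 \<or> dG g0 * dH h = dG g0 * dH h0" using deg[OF g0V h] k0 by simp
        then show ?thesis using dg0 by simp
      qed
      then show "card {e \<in> MH. h \<in> e} = 0 \<or> card {e \<in> MH. h \<in> e} = dH h0"
        unfolding dH_def .
    qed
  qed
qed


lemma km_sub: "k_matching V E k M \<Longrightarrow> M \<subseteq> E"
  unfolding k_matching_def by blast

theorem mainTheorem13:
  fixes p :: prod_kind and k :: nat
    and VG :: "'a set" and EG :: "'a set set" and VH :: "'b set" and EH :: "'b set set"
  assumes "k > 0" and "graph VG EG" and "graph VH EH"
  shows "well_behaved p k VG EG VH EH \<longleftrightarrow>
    (\<exists>kG kH. kG > 0 \<and> kH > 0 \<and> kG * kH = k \<and>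
       m_k (VG \<times> VH) (prod_edges p VG EG VH EH) k = 2 * m_k VG EG kG * m_k VH EH kH)"
proof -
  note gs = assms(2,3)
  have fG: "finite EG" and fH: "finite EH" using graph_finite[OF gs(1)] graph_finite[OF gs(2)] .
  have fP: "finite (prod_edges p VG EG VH EH)" using prod_finite gs by blast
  let ?m = "m_k (VG \<times> VH) (prod_edges p VG EG VH EH) k"
  have cardF: "k_matching VG EG kG A \<Longrightarrow> k_matching VH EH kH B \<Longrightarrow>
      card (F_ast A B) = 2 * card A * card B" for kG kH A B
  proof -
    assume a: "k_matching VG EG kG A" "k_matching VH EH kH B"
    have sA: "A \<subseteq> EG" and sB: "B \<subseteq> EH" using km_sub a by blast+
    have "finite A" using finite_subset[OF sA fG] .
    moreover have "finite B" using finite_subset[OF sB fH] .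
    moreover have "twos A" using graph_twos[OF gs(1) sA] .
    moreover have "twos B" using graph_twos[OF gs(2) sB] .
    ultimately show ?thesis by (rule card_F)
  qed
  have lower: "kG * kH = k \<Longrightarrow> 2 * m_k VG EG kG * m_k VH EH kH \<le> ?m" for kG kH
  proof -
    assume kk: "kG * kH = k"
    obtain A where A: "k_matching VG EG kG A" "card A = m_k VG EG kG" using m_k_obtain fG by blast
    obtain B where B: "k_matching VH EH kH B" "card B = m_k VH EH kH" using m_k_obtain fH by blast
    have "k_matching (VG \<times> VH) (prod_edges p VG EG VH EH) k (F_ast A B)"
      using F_match[OF gs A(1) B(1)] kk by simp
    then have "card (F_ast A B) \<le> ?m" using m_k_ge fP by blast
    then show ?thesis using cardF[OF A(1) B(1)] A B by simp
  qed
  show ?thesis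
  proof
    assume "well_behaved p k VG EG VH EH"
    then obtain MG MH where w: "MG \<subseteq> EG" "MH \<subseteq> EH"
      "k_matching (VG \<times> VH) (prod_edges p VG EG VH EH) k (F_ast MG MH)"
      "?m = card (F_ast MG MH)" unfolding well_behaved_def by blast
    show "\<exists>kG kH. kG > 0 \<and> kH > 0 \<and> kG * kH = k \<and> ?m = 2 * m_k VG EG kG * m_k VH EH kH"
    proof (cases "MG = {} \<or> MH = {}")
      case True
      have "F_ast MG MH = {}" using True unfolding F_UN by auto
      then have m0: "?m = 0" using w by simp
      have "2 * m_k VG EG k * m_k VH EH 1 = 0" using lower[of k 1] m0 by simp
      then show ?thesis using m0 assms(1) by (intro exI[of _ k] exI[of _ 1]) auto
    next
      case False
      then obtain kG kH where kk: "kG > 0" "kH > 0" "kG * kH = k"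
        "k_matching VG EG kG MG" "k_matching VH EH kH MH"
      proof -
        have "MG \<noteq> {}" "MH \<noteq> {}" using False by auto
        from F_unmatch[OF gs assms(1) w(1,2) this w(3)] that show ?thesis by blast
      qed
      have "?m = 2 * card MG * card MH" using w(4) cardF[OF kk(4,5)] by simp
      also have "\<dots> \<le> 2 * m_k VG EG kG * m_k VH EH kH"
        using m_k_ge[OF fG kk(4)] m_k_ge[OF fH kk(5)] by (simp add: mult_le_mono)
      finally show ?thesis using lower[OF kk(3)] kk(1-3) by (intro exI[of _ kG] exI[of _ kH]) auto
    qed
  next
    assume "\<exists>kG kH. kG > 0 \<and> kH > 0 \<and> kG * kH = k \<and> ?m = 2 * m_k VG EG kG * m_k VH EH kH"
    then obtain kG kH where kk: "kG * kH = k" "?m = 2 * m_k VG EG kG * m_k VH EH kH" by blast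
    obtain A where A: "k_matching VG EG kG A" "card A = m_k VG EG kG" using m_k_obtain fG by blast
    obtain B where B: "k_matching VH EH kH B" "card B = m_k VH EH kH" using m_k_obtain fH by blast
    have "k_matching (VG \<times> VH) (prod_edges p VG EG VH EH) k (F_ast A B)"
      using F_match[OF gs A(1) B(1)] kk by simp
    moreover have "?m = card (F_ast A B)" using cardF[OF A(1) B(1)] A B kk by simp
    moreover have "A \<subseteq> EG" "B \<subseteq> EH" using km_sub A(1) B(1) by blast+
    ultimately show "well_behaved p k VG EG VH EH"
      unfolding well_behaved_def by (intro exI[of _ A] exI[of _ B]) simp
  qed
qed

end
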